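(* Let $\Sigma$ be a simply connected non-planar minimal surface in $\mathbb{R}^3$, parametrized (up to translations) by the conformal harmonic immersion \[ \mathbf{X}(\zeta)=\Big(\mathrm{Re}\int\phi_1(\zeta)\,d\zeta,\ \mathrm{Re}\int\phi_2(\zeta)\,d\zeta,\ \mathrm{Re}\int\phi_3(\zeta)\,d\zeta\Big), \] where $\zeta$ is a conformal coordinate and the holomorphic null curve $\phi=(\phi_1,\phi_2,\phi_3)$ is given in terms of Weierstrass data $(G(\zeta),\Psi(\zeta)\,d\zeta)$ ($G$ meromorphic, $\Psi\,d\zeta$ a holomorphic one-form) by \[ \phi=\Big(\tfrac12(1-G^2)\Psi,\ \tfrac{i}{2}(1+G^2)\Psi,\ G\Psi\Big). \] Let $c\in\mathbb{C}$ be a constant and define the holomorphic curve $\widehat{\phi}=(\widehat{\phi}_0,\widehat{\phi}_1,\widehat{\phi}_2,\widehat{\phi}_3)$ by \[ \widehat{\phi}=\Big(c\,G^2\Psi,\ \tfrac12\big(1+(c^2-1)G^2\big)\Psi,\ \tfrac{i}{2}\big(1+(c^2+1)G^2\big)\Psi,\ G\Psi\Big). \] Then there exists a minimal surface $\Sigma^c$ in $\mathbb{R}^4$, parametrized (up to translations) by the conformal harmonic immersion \[ \mathbf{X}^c(\zeta)=\Big(\mathrm{Re}\int\widehat{\phi}_0\,d\zeta,\ \mathrm{Re}\int\widehat{\phi}_1\,d\zeta,\ \mathrm{Re}\int\widehat{\phi}_2\,d\zeta,\ \mathrm{Re}\int\widehat{\phi}_3\,d\zeta\Big). \] The metric induced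 on $\Sigma^c$ by $\mathbf{X}^c$ is \[ g_{\Sigma^c}=\frac14\Big(|\Psi|^2\,|1+c^2G^2|^2\Big(1+\frac{|G|^2}{|1+icG|^2}\Big)\Big(1+\frac{|G|^2}{|1-icG|^2}\Big)\Big)|d\zeta|^2 . \] Moreover $\widehat{\phi}_0+c\,\widehat{\phi}_1+ic\,\widehat{\phi}_2=0$, and consequently the minimal surface $\Sigma^c$ in $\mathbb{R}^4$ is degenerate.
   Context: For a conformal harmonic immersion $\mathbf{X}:\Sigma\to\mathbb{R}^4$ with local conformal coordinate $\zeta$, its Gauss map is $\mathcal{G}(\zeta)=[\partial\mathbf{X}/\partial\zeta]=[\phi_0:\phi_1:\phi_2:\phi_3]\in\mathbb{CP}^3$, where $(\phi_0,\ldots,\phi_3)=2\,d\mathbf{X}/d\zeta$; it takes values in the quadric $\{z_0^2+z_1^2+z_2^2+z_3^2=0\}\subset\mathbb{CP}^3$. The minimal surface is called degenerate if the image of its Gauss map lies in a hyperplane of $\mathbb{CP}^3$. A holomorphic curve $(\phi_k)$ is null if $\sum_k\phi_k^2=0$; the real parts of integrals of a holomorphic null curve give a conformal harmonic map, with induced metric $\frac12\sum_k|\phi_k|^2|d\zeta|^2$. *)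

theory Defs
  imports "HOL-Analysis.Analysis" "HOL-Complex_Analysis.Complex_Analysis"
begin

text \<open>Surfaces are maps from a domain U of the conformal coordinate
  zeta = x + i y (a subset of the complex plane) into real^n.\<close>

definition px :: "(complex \<Rightarrow> 'a::real_normed_vector) \<Rightarrow> complex \<Rightarrow> 'a" where
  "px X z = frechet_derivative X (at z) 1"

definition py :: "(complex \<Rightarrow> 'a::real_normed_vector) \<Rightarrow> complex \<Rightarrow> 'a" where
  "py X z = frechet_derivative X (at z) \<i>"

definition conformal_harmonic_immersion :: "(complex \<Rightarrow> real^'n) \<Rightarrow> complex set \<Rightarrow> bool" where
  "conformal_harmonic_immersion X U \<longleftrightarrow> open U \<and>
     (\<forall>z\<in>U. X differentiable at z \<and> px X differentiable at z \<and> py X differentiable at z) \<and>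
     continuous_on U (px (px X)) \<and> continuous_on U (py (px X)) \<and>
     continuous_on U (px (py X)) \<and> continuous_on U (py (py X)) \<and>
     (\<forall>z\<in>U. px (px X) z + py (py X) z = 0) \<and>
     (\<forall>z\<in>U. px X z \<bullet> py X z = 0 \<and> norm (px X z) = norm (py X z) \<and> px X z \<noteq> 0)"

text \<open>(phi_k) = 2 dX/dzeta = X_x - i X_y, a representative of the Gauss map.\<close>
definition dphi :: "(complex \<Rightarrow> real^'n) \<Rightarrow> complex \<Rightarrow> complex^'n" where
  "dphi X z = (\<chi> k. complex_of_real (px X z $ k) - \<i> * complex_of_real (py X z $ k))"

text \<open>Degenerate: the Gauss map image lies in a hyperplane of CP^(n-1).\<close>
definition degenerate_surface :: "(complex \<Rightarrow> real^'n) \<Rightarrow> complex set \<Rightarrow> bool" where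
  "degenerate_surface X U \<longleftrightarrow>
     (\<exists>a::complex^'n. a \<noteq> 0 \<and> (\<forall>z\<in>U. (\<Sum>k\<in>UNIV. a $ k * dphi X z $ k) = 0))"

text \<open>Coefficient lambda of the induced metric g = lambda |dzeta|^2 (= |X_x|^2 = |X_y|^2).\<close>
definition induced_metric :: "(complex \<Rightarrow> real^'n) \<Rightarrow> complex \<Rightarrow> real" where
  "induced_metric X z = px X z \<bullet> px X z"

definition planar_surface :: "(complex \<Rightarrow> real^3) \<Rightarrow> complex set \<Rightarrow> bool" where
  "planar_surface X U \<longleftrightarrow> (\<exists>a b. a \<noteq> 0 \<and> (\<forall>z\<in>U. a \<bullet> X z = b))"

end

theory Submission
  imports Defs
begin


lemma hd_vec:
  fixes g :: "'i::finite \<Rightarrow> 'a::real_normed_vector \<Rightarrow> real"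
  assumes "\<And>i. (g i has_derivative g' i) (at a)"
  shows "((\<lambda>x. \<chi> i. g i x) has_derivative (\<lambda>h. \<chi> i. g' i h)) (at a)"
  apply (subst has_derivative_componentwise_within)
  using assms by (auto simp: Basis_vec_def inner_axis)

lemma vector_4 [simp]:
 "(vector [x,y,z,w] ::('a::zero)^4)$1 = x"
 "(vector [x,y,z,w] ::('a::zero)^4)$2 = y"
 "(vector [x,y,z,w] ::('a::zero)^4)$3 = z"
 "(vector [x,y,z,w] ::('a::zero)^4)$4 = w"
  unfolding vector_def by (simp_all add: numeral_eq_Suc)

lemma ext_eq:
  fixes f g :: "complex \<Rightarrow> complex"
  assumes "isCont f z" "isCont g z" "eventually (\<lambda>w. f w = g w) (at z)"
  shows "f z = g z"
proof -
  have "(f \<longlongrightarrow> f z) (at z)" using assms(1) isCont_def by blast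
  moreover have "(f \<longlongrightarrow> g z) (at z)"
    using assms(2) isCont_def tendsto_cong[OF assms(3)] by blast
  ultimately show ?thesis by (rule tendsto_unique[OF at_neq_bot])
qed

lemma ext0:
  assumes "open U" "G meromorphic_on U" "continuous_on U h"
    "\<And>w. w\<in>U \<Longrightarrow> G analytic_on {w} \<Longrightarrow> h w = (0::complex)" "z\<in>U"
  shows "h z = 0"
proof -
  have "isolated_singularity_at G z" using assms(2,5) meromorphic_on_altdef by blast
  then obtain r where r: "r>0" "G analytic_on ball z r - {z}"
    unfolding isolated_singularity_at_def by blast
  have ev1: "eventually (\<lambda>w. w \<in> U) (at z)"
    using assms(1,5) eventually_at_topological by blast
  have ev2: "eventually (\<lambda>w. w \<in> ball z r - {z}) (at z)"
    using r(1) by (auto simp: eventually_at dist_commute intro!: exI[of _ r])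
  have "eventually (\<lambda>w. h w = 0) (at z)"
    using ev1 ev2
  proof eventually_elim
    case (elim w)
    then show ?case using assms(4) r(2) analytic_on_subset by (metis empty_subsetI insert_subset)
  qed
  moreover have "isCont h z" using assms(1,3,5) continuous_on_eq_continuous_at by blast
  ultimately show ?thesis using ext_eq[where f=h and z=z and g="\<lambda>_. 0"] by simp
qed

lemma gen:
  fixes F f :: "complex \<Rightarrow> complex^'n"
  assumes U: "open U"
    and der: "\<And>k z. z\<in>U \<Longrightarrow> ((\<lambda>w. F w $ k) has_field_derivative f z $ k) (at z)"
    and hol: "\<And>k. (\<lambda>w. f w $ k) holomorphic_on U"
    and null: "\<And>z. z\<in>U \<Longrightarrow> (\<Sum>k\<in>UNIV. (f z $ k)^2) = 0"
    and nz: "\<And>z. z\<in>U \<Longrightarrow> f z \<noteq> 0"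
  shows "conformal_harmonic_immersion (\<lambda>z. \<chi> k. Re (F z $ k)) U \<and>
     (\<forall>z\<in>U. dphi (\<lambda>z. \<chi> k. Re (F z $ k)) z = f z) \<and>
     (\<forall>z\<in>U. induced_metric (\<lambda>z. \<chi> k. Re (F z $ k)) z = (\<Sum>k\<in>UNIV. (cmod (f z $ k))^2)/2)"
proof -
  define Xc where "Xc = (\<lambda>z. \<chi> k. Re (F z $ k))"
  define dk where "dk k = deriv (\<lambda>w. f w $ k)" for k
  have d1: "(Xc has_derivative (\<lambda>h. \<chi> k. Re (f z $ k * h))) (at z)" if "z\<in>U" for z
    unfolding Xc_def
  proof (rule hd_vec)
    fix k
    have "((\<lambda>w. F w $ k) has_derivative (\<lambda>h. f z $ k * h)) (at z)"
      using der[OF that, of k] by (simp add: has_field_derivative_def)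
    then show "((\<lambda>x. Re (F x $ k)) has_derivative (\<lambda>h. Re (f z $ k * h))) (at z)"
      by (rule has_derivative_Re)
  qed
  have px1: "px Xc z = (\<chi> k. Re (f z $ k))" if "z\<in>U" for z
    unfolding px_def using frechet_derivative_at[OF d1[OF that], symmetric] by simp
  have py1: "py Xc z = (\<chi> k. - Im (f z $ k))" if "z\<in>U" for z
    unfolding py_def using frechet_derivative_at[OF d1[OF that], symmetric] by (simp add: vec_eq_iff)
  have hd: "((\<lambda>w. f w $ k) has_field_derivative dk k z) (at z)" if "z\<in>U" for z k
    unfolding dk_def using holomorphic_derivI[OF hol U that] by blast
  have hdk: "dk k holomorphic_on U" for k
    unfolding dk_def using holomorphic_deriv[OF hol U] .
  have cdk: "continuous_on U (dk k)" for k
    using hdk holomorphic_on_imp_continuous_on by blast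
  have d2: "(px Xc has_derivative (\<lambda>h. \<chi> k. Re (dk k z * h))) (at z)" if "z\<in>U" for z
  proof (rule has_derivative_transform_within_open[OF _ U that])
    show "((\<lambda>w. \<chi> k. Re (f w $ k)) has_derivative (\<lambda>h. \<chi> k. Re (dk k z * h))) (at z)"
    proof (rule hd_vec)
      fix k
      have "((\<lambda>w. f w $ k) has_derivative (\<lambda>h. dk k z * h)) (at z)"
        using hd[OF that, of k] by (simp add: has_field_derivative_def)
      then show "((\<lambda>x. Re (f x $ k)) has_derivative (\<lambda>h. Re (dk k z * h))) (at z)"
        by (rule has_derivative_Re)
    qed
  qed (simp add: px1)
  have d3: "(py Xc has_derivative (\<lambda>h. \<chi> k. - Im (dk k z * h))) (at z)" if "z\<in>U" for z
  proof (rule has_derivative_transform_within_open[OF _ U that])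
    show "((\<lambda>w. \<chi> k. - Im (f w $ k)) has_derivative (\<lambda>h. \<chi> k. - Im (dk k z * h))) (at z)"
    proof (rule hd_vec)
      fix k
      have "((\<lambda>w. f w $ k) has_derivative (\<lambda>h. dk k z * h)) (at z)"
        using hd[OF that, of k] by (simp add: has_field_derivative_def)
      then have "((\<lambda>x. Im (f x $ k)) has_derivative (\<lambda>h. Im (dk k z * h))) (at z)"
        by (rule has_derivative_Im)
      then show "((\<lambda>x. - Im (f x $ k)) has_derivative (\<lambda>h. - Im (dk k z * h))) (at z)"
        by (rule has_derivative_minus)
    qed
  qed (simp add: py1)
  have pp1: "px (px Xc) z = (\<chi> k. Re (dk k z))" if "z\<in>U" for z
    unfolding px_def[of "px Xc" z] using frechet_derivative_at[OF d2[OF that], symmetric] by simp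
  have pp2: "py (px Xc) z = (\<chi> k. - Im (dk k z))" if "z\<in>U" for z
    unfolding py_def[of "px Xc" z] using frechet_derivative_at[OF d2[OF that], symmetric] by (simp add: vec_eq_iff)
  have pp3: "px (py Xc) z = (\<chi> k. - Im (dk k z))" if "z\<in>U" for z
    unfolding px_def[of "py Xc" z] using frechet_derivative_at[OF d3[OF that], symmetric] by simp
  have pp4: "py (py Xc) z = (\<chi> k. - Re (dk k z))" if "z\<in>U" for z
    unfolding py_def[of "py Xc" z] using frechet_derivative_at[OF d3[OF that], symmetric] by (simp add: vec_eq_iff)
  have c1: "continuous_on U (\<lambda>z. \<chi> k. Re (dk k z))"
    by (intro continuous_intros cdk)
  have c2: "continuous_on U (\<lambda>z. \<chi> k. - Im (dk k z))"
    by (intro continuous_intros cdk)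
  have c3: "continuous_on U (\<lambda>z. \<chi> k. - Re (dk k z))"
    by (intro continuous_intros cdk)
  have conf: "px Xc z \<bullet> py Xc z = 0 \<and> norm (px Xc z) = norm (py Xc z) \<and> px Xc z \<noteq> 0
     \<and> dphi Xc z = f z \<and> induced_metric Xc z = (\<Sum>k\<in>UNIV. (cmod (f z $ k))^2)/2" if z: "z\<in>U" for z
  proof -
    have n: "(\<Sum>k\<in>UNIV. (f z $ k)^2) = 0" using null[OF z] .
    have re: "(\<Sum>k\<in>UNIV. (Re (f z $ k))^2) = (\<Sum>k\<in>UNIV. (Im (f z $ k))^2)"
      using arg_cong[OF n, of Re] by (simp add: Re_power2 sum_subtractf)
    have im: "(\<Sum>k\<in>UNIV. Re (f z $ k) * Im (f z $ k)) = 0"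
      using arg_cong[OF n, of Im] by (simp add: Im_power2 sum_distrib_left[symmetric] mult.assoc)
    have i1: "px Xc z \<bullet> py Xc z = 0"
      using im by (simp add: px1[OF z] py1[OF z] inner_vec_def sum_negf)
    have i2: "px Xc z \<bullet> px Xc z = py Xc z \<bullet> py Xc z"
      using re by (simp add: px1[OF z] py1[OF z] inner_vec_def power2_eq_square)
    have i3: "norm (px Xc z) = norm (py Xc z)"
      using i2 by (simp add: norm_eq_sqrt_inner)
    have i4: "px Xc z \<noteq> 0"
    proof
      assume h: "px Xc z = 0"
      then have a: "Re (f z $ k) = 0" for k using px1[OF z] by (simp add: vec_eq_iff)
      have "(\<Sum>k\<in>UNIV. (Im (f z $ k))^2) = 0" using re a by simp
      then have "Im (f z $ k) = 0" for k
        by (subst (asm) sum_nonneg_eq_0_iff) auto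
      then have "f z = 0" using a by (simp add: vec_eq_iff complex_eq_iff)
      then show False using nz[OF z] by simp
    qed
    have i5: "dphi Xc z = f z"
      by (simp add: dphi_def px1[OF z] py1[OF z] vec_eq_iff complex_eq_iff)
    have i6: "induced_metric Xc z = (\<Sum>k\<in>UNIV. (cmod (f z $ k))^2)/2"
    proof -
      have a: "(\<Sum>k\<in>UNIV. (cmod (f z $ k))^2) = (\<Sum>k\<in>UNIV. (Re (f z $ k))^2) + (\<Sum>k\<in>UNIV. (Im (f z $ k))^2)"
        by (simp add: cmod_power2 sum.distrib)
      have b: "induced_metric Xc z = (\<Sum>k\<in>UNIV. (Re (f z $ k))^2)"
        by (simp add: induced_metric_def px1[OF z] inner_vec_def power2_eq_square)
      show ?thesis using a b re by simp
    qed
    show ?thesis using i1 i3 i4 i5 i6 by blast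
  qed
  have "conformal_harmonic_immersion Xc U"
    unfolding conformal_harmonic_immersion_def
  proof (intro conjI ballI)
    show "open U" by (rule U)
    fix z assume z: "z\<in>U"
    show "Xc differentiable at z" using d1[OF z] differentiable_def by blast
    show "px Xc differentiable at z" using d2[OF z] differentiable_def by blast
    show "py Xc differentiable at z" using d3[OF z] differentiable_def by blast
    show "px (px Xc) z + py (py Xc) z = 0" by (simp add: pp1[OF z] pp4[OF z] vec_eq_iff)
    show "px Xc z \<bullet> py Xc z = 0" "norm (px Xc z) = norm (py Xc z)" "px Xc z \<noteq> 0"
      using conf[OF z] by auto
  next
    show "continuous_on U (px (px Xc))" using continuous_on_eq[OF c1] pp1 by metis
    show "continuous_on U (py (px Xc))" using continuous_on_eq[OF c2] pp2 by metis
    show "continuous_on U (px (py Xc))" using continuous_on_eq[OF c2] pp3 by metis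
    show "continuous_on U (py (py Xc))" using continuous_on_eq[OF c3] pp4 by metis
  qed
  then show ?thesis using conf unfolding Xc_def by blast
qed



lemma metric_poly:
  fixes G P c :: complex
  shows "complex_of_real ((cmod (c*G^2*P))^2 + (cmod ((1+(c^2-1)*G^2)*P/2))^2 + (cmod (\<i>*(1+(c^2+1)*G^2)*P/2))^2 + (cmod (G*P))^2)
    = complex_of_real ((cmod P)^2 * ((cmod (1+\<i>*c*G))^2 + (cmod G)^2) * ((cmod (1-\<i>*c*G))^2 + (cmod G)^2) / 2)"
  apply (simp only: of_real_add of_real_mult of_real_divide complex_norm_square)
  apply simp
  apply (simp add: field_simps)
  apply algebra
  done


lemma lin_inj:
  fixes a b c :: complex
  assumes "((a - \<i>*b) - (c^2-1)*(a + \<i>*b))/2 = 0" "\<i>*((a - \<i>*b) - (c^2+1)*(a + \<i>*b))/2 = 0"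
  shows "a = 0 \<and> b = 0"
proof -
  define A where "A = a - \<i>*b"
  define B where "B = a + \<i>*b"
  have h1: "A - (c^2-1)*B = 0" "A - (c^2+1)*B = 0" using assms unfolding A_def B_def by auto
  have "(A - (c^2-1)*B) - (A - (c^2+1)*B) = 2*B" by (simp add: algebra_simps)
  then have B: "B = 0" using h1 by simp
  then have A: "A = 0" using h1 by simp
  have "a = (A + B)/2" "b = \<i>*(A - B)/2" unfolding A_def B_def by (simp_all add: algebra_simps)
  then show ?thesis using A B by simp
qed

lemma metric_alg:
  fixes G P c :: complex
  assumes "1 + \<i>*c*G \<noteq> 0" "1 - \<i>*c*G \<noteq> 0"
  shows "((cmod (c*G^2*P))^2 + (cmod ((1+(c^2-1)*G^2)*P/2))^2 + (cmod (\<i>*(1+(c^2+1)*G^2)*P/2))^2 + (cmod (G*P))^2) / 2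
    = (cmod P)\<^sup>2 * (cmod (1 + c ^ 2 * G ^ 2))\<^sup>2
                * (1 + (cmod G)\<^sup>2 / (cmod (1 + \<i> * c * G))\<^sup>2)
                * (1 + (cmod G)\<^sup>2 / (cmod (1 - \<i> * c * G))\<^sup>2) / 4"
proof -
  have e: "(cmod (c*G^2*P))^2 + (cmod ((1+(c^2-1)*G^2)*P/2))^2 + (cmod (\<i>*(1+(c^2+1)*G^2)*P/2))^2 + (cmod (G*P))^2
     = (cmod P)^2 * ((cmod (1+\<i>*c*G))^2 + (cmod G)^2) * ((cmod (1-\<i>*c*G))^2 + (cmod G)^2) / 2"
    using metric_poly[of c G P] of_real_eq_iff by blast
  have f: "1 + c^2*G^2 = (1+\<i>*c*G) * (1-\<i>*c*G)" by (simp add: algebra_simps power2_eq_square)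
  have g: "cmod (1 + c^2*G^2) = cmod (1+\<i>*c*G) * cmod (1-\<i>*c*G)"
    unfolding f norm_mult ..
  have p1: "cmod (1+\<i>*c*G) \<noteq> 0" "cmod (1-\<i>*c*G) \<noteq> 0" using assms by auto
  show ?thesis unfolding e g using p1 by (simp add: field_simps power2_eq_square)
qed

lemma nullpoly: fixes c g p :: complex shows
 "(c*g^2*p)^2 + ((1+(c^2-1)*g^2)*p/2)^2 + (\<i>*(1+(c^2+1)*g^2)*p/2)^2 + (g*p)^2 = 0"
  by (simp add: field_simps power2_eq_square)
lemma rel0poly: fixes c g p :: complex shows
 "c*g^2*p + c*((1+(c^2-1)*g^2)*p/2) + \<i>*c*(\<i>*(1+(c^2+1)*g^2)*p/2) = 0"
  by (simp add: field_simps power2_eq_square)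
lemma rel1poly: fixes c g p :: complex shows
 "(1+(c^2-1)*g^2)*p/2 - ((((1-g^2)*p/2) - \<i>*(\<i>*(1+g^2)*p/2)) - (c^2-1)*(((1-g^2)*p/2) + \<i>*(\<i>*(1+g^2)*p/2)))/2 = 0"
  by (simp add: field_simps power2_eq_square)
lemma rel2poly: fixes c g p :: complex shows
 "\<i>*(1+(c^2+1)*g^2)*p/2 - \<i>*((((1-g^2)*p/2) - \<i>*(\<i>*(1+g^2)*p/2)) - (c^2+1)*(((1-g^2)*p/2) + \<i>*(\<i>*(1+g^2)*p/2)))/2 = 0"
  by (simp add: field_simps power2_eq_square)

theorem theorem5p1:
  fixes U :: "complex set" and X :: "complex \<Rightarrow> real^3"
    and G \<Psi> \<phi>1 \<phi>2 \<phi>3 \<phi>h0 \<phi>h1 \<phi>h2 \<phi>h3 :: "complex \<Rightarrow> complex" and c :: complex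
  assumes U: "open U" "U \<noteq> {}" "simply_connected U"
    and G: "G meromorphic_on U"
    and \<Psi>: "\<Psi> holomorphic_on U"
    and \<phi>hol: "\<phi>1 holomorphic_on U" "\<phi>2 holomorphic_on U" "\<phi>3 holomorphic_on U"
    and \<phi>def: "\<And>z. z \<in> U \<Longrightarrow> G analytic_on {z} \<Longrightarrow>
         \<phi>1 z = (1 - G z ^ 2) * \<Psi> z / 2 \<and> \<phi>2 z = \<i> * (1 + G z ^ 2) * \<Psi> z / 2 \<and>
         \<phi>3 z = G z * \<Psi> z"
    and X: "conformal_harmonic_immersion X U"
    and Xphi: "\<And>z. z \<in> U \<Longrightarrow> dphi X z = vector [\<phi>1 z, \<phi>2 z, \<phi>3 z]"
    and nonplanar: "\<not> planar_surface X U"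
    and \<phi>hhol: "\<phi>h0 holomorphic_on U" "\<phi>h1 holomorphic_on U"
         "\<phi>h2 holomorphic_on U" "\<phi>h3 holomorphic_on U"
    and \<phi>hdef: "\<And>z. z \<in> U \<Longrightarrow> G analytic_on {z} \<Longrightarrow>
         \<phi>h0 z = c * G z ^ 2 * \<Psi> z \<and>
         \<phi>h1 z = (1 + (c ^ 2 - 1) * G z ^ 2) * \<Psi> z / 2 \<and>
         \<phi>h2 z = \<i> * (1 + (c ^ 2 + 1) * G z ^ 2) * \<Psi> z / 2 \<and>
         \<phi>h3 z = G z * \<Psi> z"
  shows "\<exists>Xc :: complex \<Rightarrow> real^4.
           conformal_harmonic_immersion Xc U \<and>
           (\<forall>z\<in>U. dphi Xc z = vector [\<phi>h0 z, \<phi>h1 z, \<phi>h2 z, \<phi>h3 z]) \<and>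
           (\<forall>z\<in>U. G analytic_on {z} \<longrightarrow> 1 + \<i> * c * G z \<noteq> 0 \<longrightarrow> 1 - \<i> * c * G z \<noteq> 0 \<longrightarrow>
              induced_metric Xc z =
                (cmod (\<Psi> z))\<^sup>2 * (cmod (1 + c ^ 2 * G z ^ 2))\<^sup>2
                * (1 + (cmod (G z))\<^sup>2 / (cmod (1 + \<i> * c * G z))\<^sup>2)
                * (1 + (cmod (G z))\<^sup>2 / (cmod (1 - \<i> * c * G z))\<^sup>2) / 4) \<and>
           (\<forall>z\<in>U. \<phi>h0 z + c * \<phi>h1 z + \<i> * c * \<phi>h2 z = 0) \<and>
           degenerate_surface Xc U"
  proof -
  note cont = holomorphic_on_imp_continuous_on
  have c1: "continuous_on U \<phi>1" "continuous_on U \<phi>2" "continuous_on U \<phi>3"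
    using \<phi>hol cont by blast+
  have c2: "continuous_on U \<phi>h0" "continuous_on U \<phi>h1" "continuous_on U \<phi>h2" "continuous_on U \<phi>h3"
    using \<phi>hhol cont by blast+
  have E: "h z = 0" if "continuous_on U h" "\<And>w. w\<in>U \<Longrightarrow> G analytic_on {w} \<Longrightarrow> h w = 0" "z \<in> U" for h :: "complex \<Rightarrow> complex" and z
    using ext0[OF U(1) G that] .
  obtain F0 where F0: "\<And>z. z\<in>U \<Longrightarrow> (F0 has_field_derivative \<phi>h0 z) (at z)"
    using U(3) \<phi>hhol(1) simply_connected_eq_global_primitive[OF U(1)] by meson
  obtain F1 where F1: "\<And>z. z\<in>U \<Longrightarrow> (F1 has_field_derivative \<phi>h1 z) (at z)"
    using U(3) \<phi>hhol(2) simply_connected_eq_global_primitive[OF U(1)] by meson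
  obtain F2 where F2: "\<And>z. z\<in>U \<Longrightarrow> (F2 has_field_derivative \<phi>h2 z) (at z)"
    using U(3) \<phi>hhol(3) simply_connected_eq_global_primitive[OF U(1)] by meson
  obtain F3 where F3: "\<And>z. z\<in>U \<Longrightarrow> (F3 has_field_derivative \<phi>h3 z) (at z)"
    using U(3) \<phi>hhol(4) simply_connected_eq_global_primitive[OF U(1)] by meson
  define Fv :: "complex \<Rightarrow> complex^4" where "Fv z = vector [F0 z, F1 z, F2 z, F3 z]" for z
  define fv :: "complex \<Rightarrow> complex^4" where "fv z = vector [\<phi>h0 z, \<phi>h1 z, \<phi>h2 z, \<phi>h3 z]" for z
  have der: "((\<lambda>w. Fv w $ k) has_field_derivative fv z $ k) (at z)" if "z\<in>U" for k z
    using exhaust_4[of k] F0[OF that] F1[OF that] F2[OF that] F3[OF that]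
    by (auto simp: Fv_def fv_def)
  have hol: "(\<lambda>w. fv w $ k) holomorphic_on U" for k
    using exhaust_4[of k] \<phi>hhol by (auto simp: fv_def)
  have null: "\<phi>h0 z ^ 2 + \<phi>h1 z ^ 2 + \<phi>h2 z ^ 2 + \<phi>h3 z ^ 2 = 0" if "z\<in>U" for z
  proof (rule E[OF _ _ that])
    show "continuous_on U (\<lambda>z. \<phi>h0 z ^ 2 + \<phi>h1 z ^ 2 + \<phi>h2 z ^ 2 + \<phi>h3 z ^ 2)"
      by (intro continuous_intros c2)
    fix w assume "w\<in>U" "G analytic_on {w}"
    from \<phi>hdef[OF this] show "\<phi>h0 w ^ 2 + \<phi>h1 w ^ 2 + \<phi>h2 w ^ 2 + \<phi>h3 w ^ 2 = 0"
      using nullpoly[of c "G w" "\<Psi> w"] by (elim conjE) (simp only:)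
  qed
  have rel0: "\<phi>h0 z + c * \<phi>h1 z + \<i> * c * \<phi>h2 z = 0" if "z\<in>U" for z
  proof (rule E[OF _ _ that])
    show "continuous_on U (\<lambda>z. \<phi>h0 z + c * \<phi>h1 z + \<i> * c * \<phi>h2 z)"
      by (intro continuous_intros c2)
    fix w assume "w\<in>U" "G analytic_on {w}"
    from \<phi>hdef[OF this] show "\<phi>h0 w + c * \<phi>h1 w + \<i> * c * \<phi>h2 w = 0"
      using rel0poly[of c "G w" "\<Psi> w"] by (elim conjE) (simp only:)
  qed
  have rel1: "\<phi>h1 z - ((\<phi>1 z - \<i>*\<phi>2 z) - (c^2-1)*(\<phi>1 z + \<i>*\<phi>2 z))/2 = 0" if "z\<in>U" for z
  proof (rule E[OF _ _ that])
    show "continuous_on U (\<lambda>z. \<phi>h1 z - ((\<phi>1 z - \<i>*\<phi>2 z) - (c^2-1)*(\<phi>1 z + \<i>*\<phi>2 z))/2)"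
      by (intro continuous_intros c1 c2; simp)
    fix w assume "w\<in>U" "G analytic_on {w}"
    from \<phi>hdef[OF this] \<phi>def[OF this]
    show "\<phi>h1 w - ((\<phi>1 w - \<i>*\<phi>2 w) - (c^2-1)*(\<phi>1 w + \<i>*\<phi>2 w))/2 = 0"
      using rel1poly[of c "G w" "\<Psi> w"] by (elim conjE) (simp only:)
  qed
  have rel2: "\<phi>h2 z - \<i>*((\<phi>1 z - \<i>*\<phi>2 z) - (c^2+1)*(\<phi>1 z + \<i>*\<phi>2 z))/2 = 0" if "z\<in>U" for z
  proof (rule E[OF _ _ that])
    show "continuous_on U (\<lambda>z. \<phi>h2 z - \<i>*((\<phi>1 z - \<i>*\<phi>2 z) - (c^2+1)*(\<phi>1 z + \<i>*\<phi>2 z))/2)"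
      by (intro continuous_intros c1 c2; simp)
    fix w assume "w\<in>U" "G analytic_on {w}"
    from \<phi>hdef[OF this] \<phi>def[OF this]
    show "\<phi>h2 w - \<i>*((\<phi>1 w - \<i>*\<phi>2 w) - (c^2+1)*(\<phi>1 w + \<i>*\<phi>2 w))/2 = 0"
      using rel2poly[of c "G w" "\<Psi> w"] by (elim conjE) (simp only:)
  qed
  have rel3: "\<phi>h3 z - \<phi>3 z = 0" if "z\<in>U" for z
  proof (rule E[OF _ _ that])
    show "continuous_on U (\<lambda>z. \<phi>h3 z - \<phi>3 z)"
      by (intro continuous_intros c1 c2; simp)
    fix w assume "w\<in>U" "G analytic_on {w}"
    from \<phi>hdef[OF this] \<phi>def[OF this]
    show "\<phi>h3 w - \<phi>3 w = 0" by simp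
  qed
  have dnz: "dphi X z \<noteq> 0" if "z\<in>U" for z
  proof
    assume h: "dphi X z = 0"
    have "px X z $ k = 0" for k
      using arg_cong[OF h, of "\<lambda>v::complex^3. Re (v $ k)"] by (simp add: dphi_def)
    then have "px X z = 0" by (simp add: vec_eq_iff)
    then show False using X that unfolding conformal_harmonic_immersion_def by blast
  qed
  have nz: "fv z \<noteq> 0" if z: "z\<in>U" for z
  proof
    assume h: "fv z = 0"
    have hz: "\<phi>h0 z = 0" "\<phi>h1 z = 0" "\<phi>h2 z = 0" "\<phi>h3 z = 0"
      using arg_cong[OF h, of "\<lambda>v::complex^4. v $ 1"] arg_cong[OF h, of "\<lambda>v::complex^4. v $ 2"]
        arg_cong[OF h, of "\<lambda>v::complex^4. v $ 3"] arg_cong[OF h, of "\<lambda>v::complex^4. v $ 4"]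
      by (simp_all add: fv_def)
    have "\<phi>1 z = 0 \<and> \<phi>2 z = 0"
      using rel1[OF z] rel2[OF z] hz by (intro lin_inj[of _ _ c]) simp_all
    moreover have "\<phi>3 z = 0" using rel3[OF z] hz by simp
    ultimately have "dphi X z = 0" using Xphi[OF z]
      by (simp add: vec_eq_iff forall_3 vector_3)
    then show False using dnz[OF z] by blast
  qed
  have null': "(\<Sum>k\<in>UNIV. (fv z $ k)^2) = 0" if "z\<in>U" for z
    using null[OF that] by (simp add: sum_4 fv_def)
  from gen[of U Fv fv, OF U(1) der hol null' nz]
  obtain Xc :: "complex \<Rightarrow> real^4" where Xc: "conformal_harmonic_immersion Xc U"
    "\<forall>z\<in>U. dphi Xc z = fv z"
    "\<forall>z\<in>U. induced_metric Xc z = (\<Sum>k\<in>UNIV. (cmod (fv z $ k))^2)/2" by blast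
  show ?thesis
  proof (intro exI[of _ Xc] conjI ballI impI)
    show "conformal_harmonic_immersion Xc U" by (rule Xc(1))
    fix z assume z: "z\<in>U"
    show "dphi Xc z = vector [\<phi>h0 z, \<phi>h1 z, \<phi>h2 z, \<phi>h3 z]" using Xc(2) z by (simp add: fv_def)
    show "\<phi>h0 z + c * \<phi>h1 z + \<i> * c * \<phi>h2 z = 0" by (rule rel0[OF z])
    assume an: "G analytic_on {z}" and n1: "1 + \<i> * c * G z \<noteq> 0" and n2: "1 - \<i> * c * G z \<noteq> 0"
    have "induced_metric Xc z = ((cmod (\<phi>h0 z))^2 + (cmod (\<phi>h1 z))^2 + (cmod (\<phi>h2 z))^2 + (cmod (\<phi>h3 z))^2)/2"
      using Xc(3) z by (simp add: sum_4 fv_def)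
    also have "\<dots> = ((cmod (c*G z^2*\<Psi> z))^2 + (cmod ((1+(c^2-1)*G z^2)*\<Psi> z/2))^2 + (cmod (\<i>*(1+(c^2+1)*G z^2)*\<Psi> z/2))^2 + (cmod (G z*\<Psi> z))^2) / 2"
      using \<phi>hdef[OF z an] by (elim conjE) (simp only:)
    also have "\<dots> = (cmod (\<Psi> z))\<^sup>2 * (cmod (1 + c ^ 2 * G z ^ 2))\<^sup>2
                * (1 + (cmod (G z))\<^sup>2 / (cmod (1 + \<i> * c * G z))\<^sup>2)
                * (1 + (cmod (G z))\<^sup>2 / (cmod (1 - \<i> * c * G z))\<^sup>2) / 4"
      by (rule metric_alg[OF n1 n2])
    finally show "induced_metric Xc z = (cmod (\<Psi> z))\<^sup>2 * (cmod (1 + c ^ 2 * G z ^ 2))\<^sup>2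
                * (1 + (cmod (G z))\<^sup>2 / (cmod (1 + \<i> * c * G z))\<^sup>2)
                * (1 + (cmod (G z))\<^sup>2 / (cmod (1 - \<i> * c * G z))\<^sup>2) / 4" .
  next
    show "degenerate_surface Xc U"
      unfolding degenerate_surface_def
    proof (intro exI[of _ "vector [1, c, \<i>*c, 0] :: complex^4"] conjI ballI)
      show "(vector [1, c, \<i>*c, 0] :: complex^4) \<noteq> 0"
      proof
        assume "(vector [1, c, \<i>*c, 0] :: complex^4) = 0"
        from arg_cong[OF this, of "\<lambda>v::complex^4. v $ 1"] show False by simp
      qed
      fix z assume z: "z\<in>U"
      show "(\<Sum>k\<in>UNIV. (vector [1, c, \<i>*c, 0] :: complex^4) $ k * dphi Xc z $ k) = 0"
        using Xc(2) z rel0[OF z] by (simp add: sum_4 fv_def algebra_simps)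
    qed
  qed
qed


end
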